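(* Let $G$ be a connected graph with $n\ge 2$ vertices and let $\varepsilon\ge 0$. If $G$ has at least $\varepsilon n$ bad vertices, then the graphic TSP cost of $G$ is at least $(1+\varepsilon)n-2$.
   Context: A vertex is bad if it has degree $1$, or it has degree $2$ and is an articulation point (a vertex whose removal increases the number of connected components). For a connected unweighted undirected graph $G=(V,E)$ with $n\ge 2$ vertices, the graphic TSP cost is $\min \sum_{i=1}^{n} d_G(v_i,v_{i+1})$ over cyclic orderings $(v_1,\dots,v_n)$ of $V$ ($v_{n+1}=v_1$), where $d_G$ is shortest-path distance. *)

theory Defs
  imports Complex_Main
begin

definition simple_graph :: "'a set \<Rightarrow> ('a \<Rightarrow> 'a \<Rightarrow> bool) \<Rightarrow> bool" where
  "simple_graph V E \<longleftrightarrow> finite V \<and> (\<forall>u v. E u v \<longrightarrow> E v u) \<and> (\<forall>v. \<not> E v v)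
      \<and> (\<forall>u v. E u v \<longrightarrow> u \<in> V \<and> v \<in> V)"

definition is_walk :: "'a set \<Rightarrow> ('a \<Rightarrow> 'a \<Rightarrow> bool) \<Rightarrow> 'a list \<Rightarrow> bool" where
  "is_walk W E p \<longleftrightarrow> p \<noteq> [] \<and> set p \<subseteq> W \<and> (\<forall>i. Suc i < length p \<longrightarrow> E (p ! i) (p ! Suc i))"

definition reachable :: "'a set \<Rightarrow> ('a \<Rightarrow> 'a \<Rightarrow> bool) \<Rightarrow> 'a \<Rightarrow> 'a \<Rightarrow> bool" where
  "reachable W E u v \<longleftrightarrow> (\<exists>p. is_walk W E p \<and> hd p = u \<and> last p = v)"

definition connected_graph :: "'a set \<Rightarrow> ('a \<Rightarrow> 'a \<Rightarrow> bool) \<Rightarrow> bool" where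
  "connected_graph V E \<longleftrightarrow> V \<noteq> {} \<and> (\<forall>u\<in>V. \<forall>v\<in>V. reachable V E u v)"

definition components :: "'a set \<Rightarrow> ('a \<Rightarrow> 'a \<Rightarrow> bool) \<Rightarrow> 'a set set" where
  "components W E = (\<lambda>v. {u \<in> W. reachable W E v u}) ` W"

definition num_components :: "'a set \<Rightarrow> ('a \<Rightarrow> 'a \<Rightarrow> bool) \<Rightarrow> nat" where
  "num_components W E = card (components W E)"

definition articulation_point :: "'a set \<Rightarrow> ('a \<Rightarrow> 'a \<Rightarrow> bool) \<Rightarrow> 'a \<Rightarrow> bool" where
  "articulation_point V E v \<longleftrightarrow> v \<in> V \<and> num_components (V - {v}) E > num_components V E"

definition degree :: "'a set \<Rightarrow> ('a \<Rightarrow> 'a \<Rightarrow> bool) \<Rightarrow> 'a \<Rightarrow> nat" where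
  "degree V E v = card {u \<in> V. E v u}"

definition bad_vertex :: "'a set \<Rightarrow> ('a \<Rightarrow> 'a \<Rightarrow> bool) \<Rightarrow> 'a \<Rightarrow> bool" where
  "bad_vertex V E v \<longleftrightarrow> v \<in> V \<and>
     (degree V E v = 1 \<or> (degree V E v = 2 \<and> articulation_point V E v))"

definition dist :: "'a set \<Rightarrow> ('a \<Rightarrow> 'a \<Rightarrow> bool) \<Rightarrow> 'a \<Rightarrow> 'a \<Rightarrow> nat" where
  "dist V E u v = (LEAST k. \<exists>p. is_walk V E p \<and> hd p = u \<and> last p = v \<and> length p = Suc k)"

definition tour_cost :: "'a set \<Rightarrow> ('a \<Rightarrow> 'a \<Rightarrow> bool) \<Rightarrow> 'a list \<Rightarrow> nat" where
  "tour_cost V E xs = (\<Sum>i<length xs. dist V E (xs ! i) (xs ! (Suc i mod length xs)))"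

definition graphic_tsp :: "'a set \<Rightarrow> ('a \<Rightarrow> 'a \<Rightarrow> bool) \<Rightarrow> nat" where
  "graphic_tsp V E = Min {tour_cost V E xs | xs. distinct xs \<and> set xs = V}"

end

theory Submission
  imports Defs
begin

lemma walk_iff: "is_walk W E p \<longleftrightarrow> p \<noteq> [] \<and> set p \<subseteq> W \<and> successively E p"
  unfolding is_walk_def successively_conv_nth by blast

lemma reach_refl: "x \<in> W \<Longrightarrow> reachable W E x x"
  unfolding reachable_def by (rule exI[of _ "[x]"]) (simp add: walk_iff)

lemma reach_snoc:
  assumes "reachable W E a x" "E x y" "y \<in> W" shows "reachable W E a y"
proof -
  obtain p where p: "is_walk W E p" "hd p = a" "last p = x" using assms(1) unfolding reachable_def by blast
  have "is_walk W E (p @ [y])" using p assms(2,3) by (auto simp: walk_iff successively_append_iff)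
  moreover have "hd (p @ [y]) = a" using p by (auto simp: walk_iff)
  ultimately show ?thesis unfolding reachable_def by force
qed

lemma walk_append:
  assumes "is_walk W E p" "is_walk W E q" "last p = hd q"
  shows "is_walk W E (p @ tl q)" "hd (p @ tl q) = hd p" "last (p @ tl q) = last q"
    "length (p @ tl q) = length p + length q - 1" "set q \<subseteq> set (p @ tl q)" "set p \<subseteq> set (p @ tl q)"
proof -
  obtain h t where ht: "q = h # t" using assms(2) by (cases q) (auto simp: walk_iff)
  have P: "successively E (h # t)" "set (h#t) \<subseteq> W" "last p = h" "p \<noteq> []" "successively E p" "set p \<subseteq> W"
      using assms ht by (auto simp: walk_iff)
  show "is_walk W E (p @ tl q)" using P ht
      by (cases t) (simp_all add: walk_iff successively_append_iff)
  show "hd (p @ tl q) = hd p" using P by simp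
  show "last (p @ tl q) = last q" using P ht by (cases t) auto
  show "length (p @ tl q) = length p + length q - 1" using P ht by simp
  show "set q \<subseteq> set (p @ tl q)" using P ht by auto
  show "set p \<subseteq> set (p @ tl q)" by auto
qed

lemma reach_trans:
  assumes "reachable W E a b" "reachable W E b c" shows "reachable W E a c"
  using assms walk_append unfolding reachable_def by metis

lemma reach_sym:
  assumes "\<forall>u v. E u v \<longrightarrow> E v u" "reachable W E a b" shows "reachable W E b a"
proof -
  obtain p where p: "is_walk W E p" "hd p = a" "last p = b" using assms(2) unfolding reachable_def by blast
  have "is_walk W E (rev p)" using p assms(1) by (auto simp: walk_iff elim: successively_mono)
  moreover have "hd (rev p) = b" "last (rev p) = a" using p by (auto simp: walk_iff hd_rev last_rev)
  ultimately show ?thesis unfolding reachable_def by blast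
qed

lemma walk_to_v:
  "is_walk W E p \<Longrightarrow> last p = v \<Longrightarrow> hd p \<noteq> v \<Longrightarrow> \<exists>y. E y v \<and> reachable (W - {v}) E (hd p) y"
proof (induction p)
  case Nil then show ?case by (simp add: walk_iff)
next
  case (Cons x q)
  show ?case
  proof (cases "q = []")
    case True then show ?thesis using Cons by simp
  next
    case False
    have wq: "is_walk W E q" and xW: "x \<in> W" and Exq: "E x (hd q)" using Cons.prems False
      by (auto simp: walk_iff successively_Cons)
    show ?thesis
    proof (cases "hd q = v")
      case True then show ?thesis using Exq xW Cons.prems by (auto intro!: reach_refl)
    next
      case F2: False
      obtain y where y: "E y v" "reachable (W - {v}) E (hd q) y" using Cons.IH[OF wq] Cons.prems False F2 by auto
      obtain r where r: "is_walk (W-{v}) E r" "hd r = hd q" "last r = y" using y(2) unfolding reachable_def by blast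
      have "is_walk (W-{v}) E (x # r)" using r xW Cons.prems Exq by (auto simp: walk_iff successively_Cons)
      then have "reachable (W - {v}) E x y" unfolding reachable_def using r
        by (metis last_ConsR list.sel(1) walk_iff)
      then show ?thesis using y by auto
    qed
  qed
qed


lemma comps_connected:
  assumes "connected_graph V E" shows "components V E = {V}"
proof -
  have "\<And>v. v \<in> V \<Longrightarrow> {u \<in> V. reachable V E v u} = V" using assms unfolding connected_graph_def by blast
  moreover have "V \<noteq> {}" using assms unfolding connected_graph_def by blast
  ultimately show ?thesis unfolding components_def by auto
qed

lemma artic_not_reach:
  assumes sg: "simple_graph V E" and cg: "connected_graph V E" and vV: "v \<in> V"
    and nb: "{w \<in> V. E v w} = {u, c}" and ap: "articulation_point V E v"
  shows "\<not> reachable (V - {v}) E c u"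
proof
  assume cu: "reachable (V - {v}) E c u"
  have sym: "\<forall>x y. E x y \<longrightarrow> E y x" using sg unfolding simple_graph_def by blast
  have uc: "reachable (V - {v}) E u c" using reach_sym[OF sym cu] .
  have all: "reachable (V - {v}) E c w" if w: "w \<in> V - {v}" for w
  proof -
    obtain p where p: "is_walk V E p" "hd p = w" "last p = v"
      using cg w vV unfolding connected_graph_def reachable_def by blast
    obtain y where y: "E y v" "reachable (V - {v}) E w y" using walk_to_v[OF p(1) p(3)] p(2) w by auto
    have "y \<in> {u, c}" using y(1) sym sg nb unfolding simple_graph_def by blast
    then have "reachable (V - {v}) E w c"
    proof (cases "y = u")
      case True then show ?thesis using reach_trans[of "V-{v}" E w y c] y(2) uc by simp
    next
      case False then have "y = c" using \<open>y \<in> {u, c}\<close> by simp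
      then show ?thesis using y(2) by simp
    qed
    then show ?thesis using reach_sym[OF sym] by blast
  qed
  have cV: "c \<in> V - {v}" using nb sg unfolding simple_graph_def by blast
  define R where "R = {x \<in> V - {v}. reachable (V - {v}) E c x}"
  have sub: "components (V - {v}) E \<subseteq> {R}"
  proof
    fix K assume "K \<in> components (V - {v}) E"
    then obtain w where w: "w \<in> V - {v}" "K = {x \<in> V - {v}. reachable (V - {v}) E w x}"
      unfolding components_def by blast
    have cw: "reachable (V - {v}) E c w" using all[OF w(1)] .
    have wc: "reachable (V - {v}) E w c" using reach_sym[OF sym cw] .
    have "K = R" unfolding w(2) R_def
    proof (intro Collect_cong conj_cong refl iffI)
      fix x assume "reachable (V - {v}) E w x" then show "reachable (V - {v}) E c x" using reach_trans[OF cw] by blast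
    next
      fix x assume "reachable (V - {v}) E c x" then show "reachable (V - {v}) E w x" using reach_trans[OF wc] by blast
    qed
    then show "K \<in> {R}" by simp
  qed
  have "num_components (V - {v}) E \<le> 1" unfolding num_components_def
    using card_mono[OF _ sub] by simp
  moreover have "num_components V E = 1" unfolding num_components_def comps_connected[OF cg] by simp
  ultimately show False using ap unfolding articulation_point_def by simp
qed

lemma bad_cut:
  assumes sg: "simple_graph V E" and cg: "connected_graph V E"
    and bad: "bad_vertex V E v" and Evu: "E v u"
  shows "\<exists>A. v \<in> A \<and> u \<notin> A \<and> (\<forall>x y. x \<in> A \<longrightarrow> y \<notin> A \<longrightarrow> E x y \<longrightarrow> x = v \<and> y = u)"
proof -
  have sym: "\<forall>x y. E x y \<longrightarrow> E y x" and irr: "\<forall>x. \<not> E x x" and inV: "\<forall>x y. E x y \<longrightarrow> x \<in> V \<and> y \<in> V"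
    and fin: "finite V" using sg unfolding simple_graph_def by blast+
  have vV: "v \<in> V" using bad unfolding bad_vertex_def by blast
  have uN: "u \<in> {w \<in> V. E v w}" using Evu inV by blast
  have finN: "finite {w \<in> V. E v w}" using fin by simp
  consider (leaf) "degree V E v = 1" | (cut) "degree V E v = 2" "articulation_point V E v"
    using bad unfolding bad_vertex_def by blast
  then show ?thesis
  proof cases
    case leaf
    then obtain z where z: "{w \<in> V. E v w} = {z}" unfolding degree_def using card_1_singletonE by blast
    then have N: "{w \<in> V. E v w} = {u}" using uN by auto
    show ?thesis
    proof (rule exI[of _ "{v}"], intro conjI)
      show "v \<in> {v}" by simp
      show "u \<notin> {v}" using Evu irr by auto
      show "\<forall>x y. x \<in> {v} \<longrightarrow> y \<notin> {v} \<longrightarrow> E x y \<longrightarrow> x = v \<and> y = u"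
        using N inV by blast
    qed
  next
    case cut
    then obtain a b where ab: "a \<noteq> b" "{w \<in> V. E v w} = {a, b}" unfolding degree_def card_2_iff by blast
    then obtain c where N: "{w \<in> V. E v w} = {u, c}" "c \<noteq> u" using uN by auto
    have nr: "\<not> reachable (V - {v}) E c u" using artic_not_reach[OF sg cg vV N(1) cut(2)] .
    have cV: "c \<in> V - {v}" using N(1) irr by blast
    define A where "A = insert v {x. reachable (V - {v}) E c x}"
    show ?thesis
    proof (rule exI[of _ A], intro conjI)
      show "v \<in> A" unfolding A_def by simp
      show "u \<notin> A" using nr Evu irr unfolding A_def by auto
      show "\<forall>x y. x \<in> A \<longrightarrow> y \<notin> A \<longrightarrow> E x y \<longrightarrow> x = v \<and> y = u"
      proof (intro allI impI)
      fix x y assume xA: "x \<in> A" and yA: "y \<notin> A" and Exy: "E x y"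
      show "x = v \<and> y = u"
      proof (cases "x = v")
        case True
        then have "y \<in> {u, c}" using N(1) Exy inV by blast
        moreover have "c \<in> A" unfolding A_def using reach_refl[OF cV] by simp
        ultimately show ?thesis using True yA by blast
      next
        case False
        then have "reachable (V - {v}) E c x" using xA unfolding A_def by simp
        moreover have "y \<in> V - {v}" using yA Exy inV unfolding A_def by auto
        ultimately have "reachable (V - {v}) E c y" using reach_snoc[of "V-{v}" E c x y] Exy by blast
        then show ?thesis using yA unfolding A_def by simp
      qed
      qed
    qed
  qed
qed

lemma dist_walk:
  assumes "reachable V E a b"
  shows "\<exists>p. is_walk V E p \<and> hd p = a \<and> last p = b \<and> length p = Suc (dist V E a b)"
proof -
  obtain p where p: "is_walk V E p" "hd p = a" "last p = b" using assms unfolding reachable_def by blast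
  then have "\<exists>k p. is_walk V E p \<and> hd p = a \<and> last p = b \<and> length p = Suc k"
    by (metis Suc_pred is_walk_def length_greater_0_conv)
  then show ?thesis unfolding dist_def by (rule LeastI_ex)
qed

lemma dist_le:
  assumes "is_walk V E p" "hd p = a" "last p = b"
  shows "dist V E a b \<le> length p - 1"
  unfolding dist_def
  by (rule Least_le) (use assms in \<open>auto simp: walk_iff\<close>)

lemma dist_step:
  assumes "connected_graph V E" "v \<in> V" "r \<in> V" "v \<noteq> r"
  shows "\<exists>u. E v u \<and> dist V E u r < dist V E v r"
proof -
  have "reachable V E v r" using assms unfolding connected_graph_def by blast
  from dist_walk[OF this] obtain p where p: "is_walk V E p" "hd p = v" "last p = r" "length p = Suc (dist V E v r)"
    by auto
  obtain x q where xq: "p = x # q" using p by (cases p) (auto simp: walk_iff)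
  have qne: "q \<noteq> []" using xq p assms(4) by auto
  have wq: "is_walk V E q" "E v (hd q)" using p xq qne by (auto simp: walk_iff successively_Cons)
  have "dist V E (hd q) r \<le> length q - 1" using dist_le[OF wq(1) refl] p xq qne by simp
  moreover have "length q = dist V E v r" using p(4) xq by simp
  moreover have "0 < length q" using qne by simp
  ultimately have "dist V E (hd q) r < dist V E v r" by linarith
  then show ?thesis using wq(2) by blast
qed

lemma crossing:
  assumes "P (p ! a)" "\<not> P (p ! b)" "a < b"
  shows "\<exists>k. a \<le> k \<and> k < b \<and> P (p ! k) \<and> \<not> P (p ! Suc k)"
  using assms
proof (induction b)
  case 0 then show ?case by simp
next
  case (Suc b)
  show ?case
  proof (cases "P (p ! b)")
    case True then show ?thesis using Suc by (intro exI[of _ b]) auto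
  next
    case False
    then have "a < b" using Suc by (metis less_SucE)
    then show ?thesis using Suc.IH[OF Suc.prems(1) False] by (meson less_SucI)
  qed
qed

lemma edges_lb:
  "successively E p \<Longrightarrow> p \<noteq> [] \<Longrightarrow>
   card (set p) \<le> card ((\<lambda>i. {p ! i, p ! Suc i}) ` {i. Suc i < length p}) + 1"
proof (induction p)
  case Nil then show ?case by simp
next
  case (Cons x q)
  show ?case
  proof (cases "q = []")
    case True then show ?thesis by simp
  next
    case False
    let ?Eq = "(\<lambda>i. {q ! i, q ! Suc i}) ` {i. Suc i < length q}"
    let ?Ep = "(\<lambda>i. {(x#q) ! i, (x#q) ! Suc i}) ` {i. Suc i < length (x#q)}"
    have IH: "card (set q) \<le> card ?Eq + 1" using Cons False by (simp add: successively_Cons)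
    have sub: "insert {x, q ! 0} ?Eq \<subseteq> ?Ep"
    proof
      fix e assume "e \<in> insert {x, q ! 0} ?Eq"
      then consider "e = {x, q ! 0}" | i where "Suc i < length q" "e = {q ! i, q ! Suc i}" by blast
      then show "e \<in> ?Ep"
      proof cases
        case 1 then show ?thesis using False by (intro image_eqI[of _ _ 0]) auto
      next
        case 2 then show ?thesis by (intro image_eqI[of _ _ "Suc i"]) auto
      qed
    qed
    have finEp: "finite ?Ep" by (rule finite_imageI, rule finite_subset[of _ "{..<length (x#q)}"]) auto
    have finEq: "finite ?Eq" by (rule finite_imageI, rule finite_subset[of _ "{..<length q}"]) auto
    show ?thesis
    proof (cases "x \<in> set q")
      case True
      have "card ?Eq \<le> card ?Ep" using sub finEp by (meson card_mono subset_insertI subset_trans)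
      then show ?thesis using IH True by (simp add: insert_absorb)
    next
      case xn: False
      have "{x, q ! 0} \<notin> ?Eq"
      proof
        assume "{x, q ! 0} \<in> ?Eq"
        then obtain i where "Suc i < length q" "{x, q ! 0} = {q ! i, q ! Suc i}" by blast
        then have "x \<in> {q ! i, q ! Suc i}" by (metis insertI1)
        then have "x = q ! i \<or> x = q ! Suc i" by blast
        then have "x \<in> set q" using \<open>Suc i < length q\<close> by (metis Suc_lessD nth_mem)
        then show False using xn by simp
      qed
      then have "card (insert {x, q ! 0} ?Eq) = card ?Eq + 1" using card_insert_disjoint[OF finEq] by simp
      moreover have "card (insert {x, q ! 0} ?Eq) \<le> card ?Ep" using card_mono[OF finEp sub] .
      ultimately have "card ?Eq + 1 \<le> card ?Ep" by simp
      then show ?thesis using IH xn by simp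
    qed
  qed
qed


lemma mult_ge2:
  assumes sg: "simple_graph V E" and cg: "connected_graph V E"
    and w: "is_walk V E p" and hl: "hd p = last p" and sp: "set p = V"
    and bad: "bad_vertex V E v" and Evu: "E v u"
  shows "2 \<le> card {i. Suc i < length p \<and> {p ! i, p ! Suc i} = {v, u}}"
proof -
  have sym: "\<forall>x y. E x y \<longrightarrow> E y x" and inV: "\<forall>x y. E x y \<longrightarrow> x \<in> V \<and> y \<in> V"
    using sg unfolding simple_graph_def by blast+
  obtain A where A: "v \<in> A" "u \<notin> A" "\<And>x y. x \<in> A \<Longrightarrow> y \<notin> A \<Longrightarrow> E x y \<Longrightarrow> x = v \<and> y = u"
    using bad_cut[OF sg cg bad Evu] by blast
  have succ: "successively E p" and pne: "p \<noteq> []" using w by (auto simp: walk_iff)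
  define lp where "lp = length p"
  have lp0: "0 < lp" using pne unfolding lp_def by simp
  have p0: "p ! 0 = p ! (lp - 1)" using hl pne unfolding lp_def by (simp add: hd_conv_nth last_conv_nth)
  have "v \<in> set p" "u \<in> set p" using sp inV Evu by auto
  then obtain i j where ij: "i < lp" "p ! i = v" "j < lp" "p ! j = u"
    unfolding lp_def in_set_conv_nth by blast
  have ex: "\<exists>k k'. Suc k < lp \<and> Suc k' < lp \<and> p ! k \<in> A \<and> p ! Suc k \<notin> A \<and> p ! k' \<notin> A \<and> p ! Suc k' \<in> A"
  proof (cases "p ! 0 \<in> A")
    case True
    have "j \<noteq> 0" proof assume "j = 0" then show False using True ij(4) A(2) by simp qed
    then have j0: "0 < j" by simp
    have "j \<noteq> lp - 1" proof assume "j = lp - 1" then show False using True ij(4) A(2) p0 by simp qed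
    then have jl: "j < lp - 1" using ij by linarith
    have uj: "p ! j \<notin> A" using ij A(1,2) by simp
    have l1: "p ! (lp - 1) \<in> A" using True p0 by simp
    obtain k where k: "k < j" "p ! k \<in> A" "p ! Suc k \<notin> A"
      using crossing[of "\<lambda>x. x \<in> A" p 0 j, OF True uj j0] by blast
    obtain k' where k': "k' < lp - 1" "p ! k' \<notin> A" "p ! Suc k' \<in> A"
      using crossing[of "\<lambda>x. x \<notin> A" p j "lp - 1", OF uj _ jl] l1 by blast
    have "Suc k < lp" "Suc k' < lp" using k(1) k'(1) jl by linarith+
    then show ?thesis using k k' by blast
  next
    case False
    have "i \<noteq> 0" proof assume "i = 0" then show False using False ij(2) A(1) by simp qed
    then have i0: "0 < i" by simp
    have "i \<noteq> lp - 1" proof assume "i = lp - 1" then show False using False ij(2) A(1) p0 by simp qed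
    then have il: "i < lp - 1" using ij by linarith
    have vi: "p ! i \<in> A" using ij A(1,2) by simp
    have l1: "p ! (lp - 1) \<notin> A" using False p0 by simp
    obtain k' where k': "k' < i" "p ! k' \<notin> A" "p ! Suc k' \<in> A"
      using crossing[of "\<lambda>x. x \<notin> A" p 0 i, OF False _ i0] vi by blast
    obtain k where k: "k < lp - 1" "p ! k \<in> A" "p ! Suc k \<notin> A"
      using crossing[of "\<lambda>x. x \<in> A" p i "lp - 1", OF vi l1 il] by blast
    have "Suc k < lp" "Suc k' < lp" using k(1) k'(1) il by linarith+
    then show ?thesis using k k' by blast
  qed
  then obtain k k' where kk: "Suc k < lp" "Suc k' < lp" "p ! k \<in> A" "p ! Suc k \<notin> A" "p ! k' \<notin> A" "p ! Suc k' \<in> A"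
    by blast
  have E1: "E (p ! k) (p ! Suc k)" using successively_nth[OF succ] kk(1) unfolding lp_def by blast
  have E2: "E (p ! Suc k') (p ! k')" using successively_nth[OF succ] kk(2) sym unfolding lp_def by blast
  have s1: "p ! k = v \<and> p ! Suc k = u" using A(3)[OF kk(3) kk(4) E1] .
  have s2: "p ! Suc k' = v \<and> p ! k' = u" using A(3)[OF kk(6) kk(5) E2] .
  have neq: "k \<noteq> k'" using kk by auto
  have sub: "{k, k'} \<subseteq> {i. Suc i < length p \<and> {p ! i, p ! Suc i} = {v, u}}"
    using kk(1,2) s1 s2 unfolding lp_def by auto
  have fin: "finite {i. Suc i < length p \<and> {p ! i, p ! Suc i} = {v, u}}"
    by (rule finite_subset[of _ "{..<length p}"]) auto
  show ?thesis using card_mono[OF fin sub] neq by simp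
qed


lemma closed_walk_bound:
  assumes sg: "simple_graph V E" and cg: "connected_graph V E" and n2: "card V \<ge> 2"
    and w: "is_walk V E p" and hl: "hd p = last p" and sp: "set p = V"
  shows "card {v \<in> V. bad_vertex V E v} + card V \<le> length p + 1"
proof -
  have irr: "\<forall>x. \<not> E x x" and finV: "finite V"
    using sg unfolding simple_graph_def by blast+
  have succ: "successively E p" and pne: "p \<noteq> []" using w by (auto simp: walk_iff)
  define I where "I = {i. Suc i < length p}"
  define s where "s = (\<lambda>i. {p ! i, p ! Suc i})"
  define D where "D = s ` I"
  define mult where "mult = (\<lambda>e. card {i \<in> I. s i = e})"
  define Bad where "Bad = {v \<in> V. bad_vertex V E v}"
  have finI: "finite I" unfolding I_def by (rule finite_subset[of _ "{..<length p}"]) auto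
  have finD: "finite D" unfolding D_def using finI by simp
  have cardI: "card I = length p - 1"
  proof -
    have "I = {..<length p - 1}" unfolding I_def by auto
    then show ?thesis by simp
  qed
  have sumD: "card I = (\<Sum>e\<in>D. mult e)"
  proof -
    have "card I = (\<Sum>i\<in>I. 1)" by simp
    also have "\<dots> = (\<Sum>e\<in>D. \<Sum>i\<in>{x. x \<in> I \<and> s x = e}. 1)"
      unfolding D_def by (rule sum.image_gen[OF finI])
    also have "\<dots> = (\<Sum>e\<in>D. mult e)" unfolding mult_def by simp
    finally show ?thesis .
  qed
  have Dlb: "card V \<le> card D + 1"
    using edges_lb[OF succ pne] sp unfolding D_def s_def I_def by simp
  define r where "r = (if \<exists>x \<in> V. \<not> bad_vertex V E x then SOME x. x \<in> V \<and> \<not> bad_vertex V E x else SOME x. x \<in> V)"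
  have Vne: "V \<noteq> {}" using n2 by auto
  have rV: "r \<in> V"
  proof (cases "\<exists>x \<in> V. \<not> bad_vertex V E x")
    case True then show ?thesis unfolding r_def by (simp, metis (mono_tags, lifting) someI_ex)
  next
    case False then show ?thesis unfolding r_def using Vne by (simp add: some_in_eq)
  qed
  define nxt where "nxt = (\<lambda>v. SOME u. E v u \<and> dist V E u r < dist V E v r)"
  have nxt: "E v (nxt v) \<and> dist V E (nxt v) r < dist V E v r" if "v \<in> V" "v \<noteq> r" for v
    unfolding nxt_def using someI_ex[OF dist_step[OF cg that(1) rV that(2)]] .
  define g where "g = (\<lambda>v. {v, nxt v})"
  define M where "M = {e \<in> D. 2 \<le> mult e}"
  have BadV: "Bad \<subseteq> V" unfolding Bad_def by auto
  have inj: "inj_on g (Bad - {r})"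
  proof (rule inj_onI)
    fix x y assume x: "x \<in> Bad - {r}" and y: "y \<in> Bad - {r}" and gxy: "g x = g y"
    show "x = y"
    proof (rule ccontr)
      assume xy: "x \<noteq> y"
      have "x \<in> g x" "y \<in> g y" unfolding g_def by simp_all
      then have "x \<in> g y" "y \<in> g x" using gxy by simp_all
      then have o1: "x = y \<or> x = nxt y" and o2: "y = x \<or> y = nxt x" unfolding g_def by simp_all
      have e1: "x = nxt y" using o1 xy by blast
      have e2: "y = nxt x" using o2 xy by blast
      have "dist V E (nxt x) r < dist V E x r" using nxt[of x] x BadV by auto
      then have l1: "dist V E y r < dist V E x r" by (subst e2)
      have "dist V E (nxt y) r < dist V E y r" using nxt[of y] y BadV by auto
      then have l2: "dist V E x r < dist V E y r" by (subst e1)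
      show False using l1 l2 by linarith
    qed
  qed
  have gM: "g ` (Bad - {r}) \<subseteq> M"
  proof
    fix e assume "e \<in> g ` (Bad - {r})"
    then obtain v where v: "v \<in> Bad - {r}" "e = g v" by blast
    have vV: "v \<in> V" and bv: "bad_vertex V E v" using v BadV unfolding Bad_def by auto
    have Ev: "E v (nxt v)" using nxt[OF vV] v by auto
    have m2: "2 \<le> mult e" using mult_ge2[OF sg cg w hl sp bv Ev]
      unfolding mult_def v(2) g_def I_def s_def by simp
    have "{i \<in> I. s i = e} \<noteq> {}"
    proof
      assume "{i \<in> I. s i = e} = {}"
      then have "mult e = 0" unfolding mult_def by (simp only: card.empty)
      then show False using m2 by simp
    qed
    then have "e \<in> D" unfolding D_def by blast
    then show "e \<in> M" using m2 unfolding M_def by simp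
  qed
  have finM: "finite M" unfolding M_def using finD by simp
  have cM: "card (Bad - {r}) \<le> card M" using card_inj_on_le[OF inj gM finM] .
  have MD: "M \<subseteq> D" unfolding M_def by auto
  have "(\<Sum>e\<in>D. mult e) = (\<Sum>e\<in>D - M. mult e) + (\<Sum>e\<in>M. mult e)"
    using sum.subset_diff[OF MD finD] .
  moreover have "card (D - M) \<le> (\<Sum>e\<in>D - M. mult e)"
  proof -
    have "1 \<le> mult e" if eDM: "e \<in> D - M" for e
    proof -
      obtain i where "i \<in> I" "s i = e" using eDM unfolding D_def by blast
      then have "{i \<in> I. s i = e} \<noteq> {}" by blast
      moreover have "finite {i \<in> I. s i = e}" using finI by simp
      ultimately show "1 \<le> mult e" unfolding mult_def by (simp add: Suc_le_eq card_gt_0_iff)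
    qed
    then show ?thesis using sum_bounded_below[of "D - M" 1 mult] by simp
  qed
  moreover have "card M * 2 \<le> (\<Sum>e\<in>M. mult e)"
  proof -
    have "2 \<le> mult e" if "e \<in> M" for e using that unfolding M_def by simp
    then show ?thesis using sum_bounded_below[of M 2 mult] by simp
  qed
  moreover have "card (D - M) + card M = card D" using card_Diff_subset[OF finM MD] card_mono[OF finD MD] by simp
  ultimately have "card D + card M \<le> card I" using sumD by linarith
  moreover have "card Bad \<le> card (Bad - {r}) + 1" by (simp add: card_Diff_singleton_if, linarith)
  ultimately show ?thesis using Dlb cM cardI pne unfolding Bad_def[symmetric]
    by (cases p) auto
qed


lemma tour_walk:
  assumes cg: "connected_graph V E" and sx: "set xs = V" and n: "length xs = n" and n0: "0 < n"
  shows "m \<le> n \<Longrightarrow> \<exists>p. is_walk V E p \<and> hd p = xs ! 0 \<and> last p = xs ! (m mod n)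
     \<and> length p = Suc (\<Sum>i<m. dist V E (xs ! i) (xs ! (Suc i mod n)))
     \<and> (\<forall>k\<le>m. xs ! (k mod n) \<in> set p)"
proof (induction m)
  case 0
  have "xs ! 0 \<in> V" using sx n n0 by auto
  then show ?case by (intro exI[of _ "[xs ! 0]"]) (auto simp: walk_iff)
next
  case (Suc m)
  then obtain p where p: "is_walk V E p" "hd p = xs ! 0" "last p = xs ! (m mod n)"
     "length p = Suc (\<Sum>i<m. dist V E (xs ! i) (xs ! (Suc i mod n)))"
     "\<forall>k\<le>m. xs ! (k mod n) \<in> set p" by auto
  have mm: "m mod n = m" using Suc.prems by simp
  have "Suc m mod n < n" using n0 by simp
  then have "xs ! (Suc m mod n) \<in> set xs" using n nth_mem by blast
  moreover have "xs ! m \<in> set xs" using n Suc.prems nth_mem by simp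
  ultimately have in1: "xs ! m \<in> V" "xs ! (Suc m mod n) \<in> V" using sx by auto
  then have "reachable V E (xs ! m) (xs ! (Suc m mod n))" using cg unfolding connected_graph_def by blast
  from dist_walk[OF this] obtain q where q: "is_walk V E q" "hd q = xs ! m" "last q = xs ! (Suc m mod n)"
    "length q = Suc (dist V E (xs ! m) (xs ! (Suc m mod n)))" by blast
  have lq: "last p = hd q" using p(3) q(2) mm by simp
  note A = walk_append[OF p(1) q(1) lq]
  show ?case
  proof (intro exI[of _ "p @ tl q"] conjI)
    show "is_walk V E (p @ tl q)" using A(1) .
    show "hd (p @ tl q) = xs ! 0" using A(2) p(2) by simp
    show "last (p @ tl q) = xs ! (Suc m mod n)" using A(3) q(3) by simp
    show "length (p @ tl q) = Suc (\<Sum>i<Suc m. dist V E (xs ! i) (xs ! (Suc i mod n)))"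
      using A(4) p(4) q(4) by simp
    show "\<forall>k\<le>Suc m. xs ! (k mod n) \<in> set (p @ tl q)"
    proof (intro allI impI)
      fix k assume "k \<le> Suc m"
      then consider "k \<le> m" | "k = Suc m" by linarith
      then show "xs ! (k mod n) \<in> set (p @ tl q)"
      proof cases
        case 1 then show ?thesis using p(5) A(6) by blast
      next
        case 2
        have "last q \<in> set q" using q(1) by (simp add: walk_iff)
        then show ?thesis using 2 q(3) A(5) by auto
      qed
    qed
  qed
qed

theorem mainTheorem12:
  fixes V :: "'a set" and E :: "'a \<Rightarrow> 'a \<Rightarrow> bool" and \<epsilon> :: real
  assumes "simple_graph V E"
    and "connected_graph V E"
    and "card V \<ge> 2"
    and "\<epsilon> \<ge> 0"
    and "real (card {v \<in> V. bad_vertex V E v}) \<ge> \<epsilon> * real (card V)"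
  shows "real (graphic_tsp V E) \<ge> (1 + \<epsilon>) * real (card V) - 2"
proof -
  note sg = assms(1) and cg = assms(2) and n2 = assms(3)
  have finV: "finite V" using sg unfolding simple_graph_def by blast
  define S where "S = {tour_cost V E xs | xs. distinct xs \<and> set xs = V}"
  have finS: "finite S"
  proof -
    have "S \<subseteq> tour_cost V E ` {xs. set xs \<subseteq> V \<and> distinct xs}" unfolding S_def by auto
    then show ?thesis using finite_subset finite_imageI finite_subset_distinct[OF finV] by blast
  qed
  have neS: "S \<noteq> {}" using finite_distinct_list[OF finV] unfolding S_def by blast
  have "graphic_tsp V E \<in> S" unfolding graphic_tsp_def S_def[symmetric] using Min_in[OF finS neS] .
  then obtain xs where xs: "distinct xs" "set xs = V" "graphic_tsp V E = tour_cost V E xs"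
    unfolding S_def by blast
  define n where "n = length xs"
  have nV: "n = card V" unfolding n_def using distinct_card[OF xs(1)] xs(2) by simp
  have n0: "0 < n" using nV n2 by simp
  obtain p where p: "is_walk V E p" "hd p = xs ! 0" "last p = xs ! (n mod n)"
     "length p = Suc (\<Sum>i<n. dist V E (xs ! i) (xs ! (Suc i mod n)))"
     "\<forall>k\<le>n. xs ! (k mod n) \<in> set p"
    using tour_walk[OF cg xs(2) n_def[symmetric] n0, of n] by auto
  have cost: "length p = Suc (graphic_tsp V E)" using p(4) xs(3) unfolding tour_cost_def n_def by simp
  have hl: "hd p = last p" using p(2,3) by simp
  have "V \<subseteq> set p"
  proof
    fix x assume "x \<in> V"
    then obtain k where "k < n" "xs ! k = x" using xs(2) unfolding n_def by (auto simp: in_set_conv_nth)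
    then show "x \<in> set p" using p(5) by (metis less_imp_le mod_less)
  qed
  moreover have "set p \<subseteq> V" using p(1) by (simp add: walk_iff)
  ultimately have sp: "set p = V" by blast
  have key: "card {v \<in> V. bad_vertex V E v} + card V \<le> graphic_tsp V E + 2"
    using closed_walk_bound[OF sg cg n2 p(1) hl sp] cost by simp
  then have "real (card {v \<in> V. bad_vertex V E v}) + real (card V) \<le> real (graphic_tsp V E) + 2"
    by linarith
  then show ?thesis using assms(5) by (simp add: algebra_simps)
qed

end
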